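(* In the setting below, suppose $p,q\geq5$. Then for all distinct $i,j,k\in\mathbb Z/N\mathbb Z$ we have $P_{ij}\subset P^+_{jk}$ and $Q_{ij}\subset Q^+_{jk}$.
   Context: Setting: $p,q$ distinct primes, $N=p+q$; $M=(m_{ik})_{i,k\in\mathbb Z/N\mathbb Z}$ has entries in $\mathbb Z/pq\mathbb Z$ and $(e^{2\pi i\,m_{ik}/pq})$ is a complex Hadamard matrix (unimodular entries, orthogonal rows). $L_i(k)=m_{ik}$, $L_{ij}=L_j-L_i$. For $d\mid pq$, $d(\mathbb Z/pq\mathbb Z)$ is the subgroup of multiples of $d$. For distinct $i,j$ there is a partition $\mathbb Z/N\mathbb Z=P_{ij}\sqcup Q_{ij}\sqcup R_{ij}$ and $r\in\mathbb Z/pq\mathbb Z$ with: $\#R_{ij}=2$ and $L_{ij}\equiv r$ on $R_{ij}$; $\#P_{ij}=p-1$ and $L_{ij}(P_{ij})=(r+q(\mathbb Z/pq\mathbb Z))\setminus\{r\}$; $\#Q_{ij}=q-1$ and $L_{ij}(Q_{ij})=(r+p(\mathbb Z/pq\mathbb Z))\setminus\{r\}$. This partition is unique ($R_{ij}$ is the pair of indices where $L_{ij}$ takes its unique repeated value). Put $P^+_{ij}=P_{ij}\cup R_{ij}$, $Q^+_{ij}=Q_{ij}\cup R_{ij}$. *)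

theory Defs
  imports Complex_Main "HOL-Number_Theory.Cong"
begin

text \<open>Indices of Z/NZ are represented by {..<N}; entries of Z/pqZ by integers,
  always compared modulo p*q.  A matrix is m :: nat => nat => int.\<close>

definition hadamard_exp :: "nat \<Rightarrow> nat \<Rightarrow> (nat \<Rightarrow> nat \<Rightarrow> int) \<Rightarrow> bool" where
  "hadamard_exp n N m \<longleftrightarrow>
     (\<forall>i<N. \<forall>i'<N. i \<noteq> i' \<longrightarrow>
        (\<Sum>k<N. cis (2 * pi * real_of_int (m i k) / real n) *
                 cnj (cis (2 * pi * real_of_int (m i' k) / real n))) = 0)"

definition Ldiff :: "(nat \<Rightarrow> nat \<Rightarrow> int) \<Rightarrow> nat \<Rightarrow> nat \<Rightarrow> nat \<Rightarrow> int" where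
  "Ldiff m i j k = m j k - m i k"

definition Rset :: "nat \<Rightarrow> nat \<Rightarrow> nat \<Rightarrow> (nat \<Rightarrow> nat \<Rightarrow> int) \<Rightarrow> nat \<Rightarrow> nat \<Rightarrow> nat set" where
  "Rset p q N m i j = {k. k < N \<and> (\<exists>k'<N. k' \<noteq> k \<and>
       [Ldiff m i j k' = Ldiff m i j k] (mod int (p * q)))}"

definition Pset :: "nat \<Rightarrow> nat \<Rightarrow> nat \<Rightarrow> (nat \<Rightarrow> nat \<Rightarrow> int) \<Rightarrow> nat \<Rightarrow> nat \<Rightarrow> nat set" where
  "Pset p q N m i j = {k. k < N \<and> k \<notin> Rset p q N m i j \<and>
       (\<exists>k'\<in>Rset p q N m i j. [Ldiff m i j k = Ldiff m i j k'] (mod int q))}"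

definition Qset :: "nat \<Rightarrow> nat \<Rightarrow> nat \<Rightarrow> (nat \<Rightarrow> nat \<Rightarrow> int) \<Rightarrow> nat \<Rightarrow> nat \<Rightarrow> nat set" where
  "Qset p q N m i j = {k. k < N \<and> k \<notin> Rset p q N m i j \<and>
       (\<exists>k'\<in>Rset p q N m i j. [Ldiff m i j k = Ldiff m i j k'] (mod int p))}"

definition Pplus where "Pplus p q N m i j = Pset p q N m i j \<union> Rset p q N m i j"
definition Qplus where "Qplus p q N m i j = Qset p q N m i j \<union> Rset p q N m i j"

end

theory Submission
  imports Defs "HOL-Computational_Algebra.Polynomial" "HOL-Computational_Algebra.Primes"
begin

definition ev :: "int poly \<Rightarrow> complex \<Rightarrow> complex" where
  "ev A z = poly (map_poly of_int A) z"

lemma ev_pCons [simp]: "ev (pCons a A) z = of_int a + z * ev A z"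
  by (simp add: ev_def map_poly_pCons)

lemma ev_0 [simp]: "ev 0 z = 0" by (simp add: ev_def)

lemma ev_const [simp]: "ev [:a:] z = of_int a" using ev_pCons[of a 0 z] by (simp del: ev_pCons)

lemma ev_add [simp]: "ev (A + B) z = ev A z + ev B z"
proof (induction A arbitrary: B)
  case 0 then show ?case by simp
next
  case (pCons a A)
  show ?case
  proof (cases B)
    case (pCons b B')
    have "ev (A + B') z = ev A z + ev B' z" using pCons.IH[of B'] by (simp add: add.commute)
    then show ?thesis using pCons by (simp add: algebra_simps)
  qed
qed

lemma ev_uminus [simp]: "ev (- A) z = - ev A z"
  by (induction A) (auto simp: algebra_simps)

lemma ev_diff [simp]: "ev (A - B) z = ev A z - ev B z"
  using ev_add[of A "-B" z] by simp

lemma ev_smult [simp]: "ev (smult a A) z = of_int a * ev A z"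
  by (induction A) (auto simp: algebra_simps)

lemma ev_mult [simp]: "ev (A * B) z = ev A z * ev B z"
  by (induction A) (auto simp: algebra_simps)

lemma ev_1 [simp]: "ev 1 z = 1"
  using ev_const[of 1 z] by (simp add: one_pCons)

lemma ev_power [simp]: "ev (A ^ k) z = ev A z ^ k"
  by (induction k) auto

lemma ev_monom [simp]: "ev (monom 1 k) z = z ^ k"
  by (simp add: ev_def map_poly_monom poly_monom)

lemma ev_x [simp]: "ev [:0,1:] z = z"
  by simp

lemma ev_pcompose: "ev (pcompose G (monom 1 l)) z = ev G (z ^ l)"
  by (induction G) (auto simp: pcompose_pCons)

lemma ev_sum: "ev (\<Sum>k\<in>S. f k) z = (\<Sum>k\<in>S. ev (f k) z)"
  by (induction S rule: infinite_finite_induct) auto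

lemma minpoly_exists:
  assumes A0: "ev A0 z = 0" "A0 \<noteq> 0"
  shows "\<exists>F. F \<noteq> 0 \<and> ev F z = 0 \<and> (\<forall>A. ev A z = 0 \<longrightarrow> F dvd A)"
proof -
  define P where "P = (\<lambda>d. \<exists>F. F \<noteq> 0 \<and> ev F z = 0 \<and> degree F = d)"
  have "P (degree A0)" using A0 unfolding P_def by blast
  define d where "d = (LEAST d. P d)"
  have "P d" unfolding d_def by (rule LeastI) fact
  then obtain F1 where F1: "F1 \<noteq> 0" "ev F1 z = 0" "degree F1 = d" unfolding P_def by blast
  define F where "F = primitive_part F1"
  have cF: "content F = 1" using F1 unfolding F_def by simp
  have "smult (content F1) F = F1" unfolding F_def by simp
  then have "of_int (content F1) * ev F z = 0" using F1 by (metis ev_smult)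
  moreover have "content F1 \<noteq> 0" using F1 by simp
  ultimately have evF: "ev F z = 0" by simp
  have F0: "F \<noteq> 0" using cF by auto
  have dF: "degree F = d" using F1 unfolding F_def by simp
  have "F dvd A" if "ev A z = 0" for A
  proof -
    define r where "r = pseudo_mod A F"
    obtain a Q where aQ: "a \<noteq> 0" "smult a A = F * Q + r"
      using pseudo_mod(1)[OF F0, of A] unfolding r_def by blast
    have "ev r z = 0"
    proof -
      have "ev (smult a A) z = ev (F * Q + r) z" using aQ by simp
      then show ?thesis using that evF by simp
    qed
    have "r = 0"
    proof (rule ccontr)
      assume "r \<noteq> 0"
      then have "degree r < degree F" using pseudo_mod(2)[OF F0, of A] unfolding r_def by blast
      moreover have "P (degree r)" unfolding P_def using \<open>r \<noteq> 0\<close> \<open>ev r z = 0\<close> by blast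
      then have "d \<le> degree r" unfolding d_def by (rule Least_le)
      ultimately show False using dF by simp
    qed
    then have eq: "smult a A = F * Q" using aQ by simp
    then have "content (smult a A) = content F * content Q" by (simp add: content_mult)
    then have "content Q = normalize a * content A" using cF by simp
    then have "a dvd content Q" by simp
    then have "[:a:] dvd Q" by (simp add: const_poly_dvd_iff_dvd_content)
    then obtain Q' where Q': "Q = [:a:] * Q'" by (elim dvdE)
    have "smult a A = smult a (F * Q')" using eq Q' by (simp add: ac_simps)
    then have "A = F * Q'" using smult_cancel[OF aQ(1)] by blast
    then show ?thesis by simp
  qed
  then show ?thesis using F0 evF by blast
qed

lemma binom_prime:
  fixes x y :: "'a::comm_ring_1"
  assumes "prime l"
  shows "\<exists>w. (x + y) ^ l = x ^ l + y ^ l + of_nat l * w"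
proof -
  have l: "l > 1" using assms prime_gt_1_nat by blast
  define S where "S = (\<Sum>k\<in>{1..l-1}. of_nat ((l choose k) div l) * x ^ k * y ^ (l - k))"
  have "(x + y) ^ l = (\<Sum>k\<le>l. of_nat (l choose k) * x ^ k * y ^ (l - k))"
    by (rule binomial_ring)
  also have "{..l} = insert 0 (insert l {1..l-1})" using l by auto
  also have "(\<Sum>k\<in>insert 0 (insert l {1..l-1}). of_nat (l choose k) * x ^ k * y ^ (l - k))
      = y ^ l + (x ^ l + (\<Sum>k\<in>{1..l-1}. of_nat (l choose k) * x ^ k * y ^ (l - k)))"
    using l by (subst sum.insert; auto)+
  also have "(\<Sum>k\<in>{1..l-1}. of_nat (l choose k) * x ^ k * y ^ (l - k))
      = of_nat l * (\<Sum>k\<in>{1..l-1}. of_nat ((l choose k) div l) * x ^ k * y ^ (l - k))"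
    unfolding sum_distrib_left
  proof (rule sum.cong)
    fix k assume k: "k \<in> {1..l-1}"
    have "l dvd (l choose k)" using k l assms by (intro dvd_choose_prime) auto
    then have "(l choose k) = l * ((l choose k) div l)" by simp
    then have "(of_nat (l choose k) :: 'a) = of_nat l * of_nat ((l choose k) div l)"
      by (metis of_nat_mult)
    then show "of_nat (l choose k) * x ^ k * y ^ (l - k) =
        of_nat l * (of_nat ((l choose k) div l) * x ^ k * y ^ (l - k))" by (simp add: ac_simps)
  qed simp
  finally have "(x + y) ^ l = y ^ l + (x ^ l + of_nat l * S)" unfolding S_def .
  then show ?thesis by (intro exI[of _ S]) (simp add: ac_simps)
qed

lemma fermat_int:
  fixes a :: int
  assumes "prime l"
  shows "(int l) dvd (a ^ l - a)"
proof -
  have l: "l > 0" using assms prime_gt_0_nat by blast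
  have nat_case: "(int l) dvd (int b ^ l - int b)" for b :: nat
  proof (induction b)
    case 0 then show ?case using l by (simp add: power_0_left)
  next
    case (Suc b)
    obtain w :: int where w: "(int b + 1) ^ l = int b ^ l + 1 ^ l + of_nat l * w"
      using binom_prime[OF assms] by blast
    have "int (Suc b) ^ l - int (Suc b) = (int b ^ l - int b) + of_nat l * w"
      using w by (simp add: add.commute)
    then show ?case using Suc.IH by (metis dvd_add dvd_triv_left)
  qed
  define b where "b = nat (a mod int l)"
  have ab: "int b = a mod int l" unfolding b_def using l by simp
  have "[a = int b] (mod int l)" using ab by (simp add: cong_def)
  then have "[a ^ l - a = int b ^ l - int b] (mod int l)"
    by (intro cong_diff cong_pow) auto
  then show ?thesis using nat_case[of b] by (simp add: cong_dvd_iff)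
qed

definition pcong :: "nat \<Rightarrow> int poly \<Rightarrow> int poly \<Rightarrow> bool" where
  "pcong l A B \<longleftrightarrow> (\<exists>K. A = B + smult (int l) K)"

lemma pcong_refl: "pcong l A A"
  unfolding pcong_def by (rule exI[of _ 0]) simp

lemma pcong_trans: "pcong l A B \<Longrightarrow> pcong l B C \<Longrightarrow> pcong l A C"
  unfolding pcong_def by (metis add.assoc smult_add_right)

lemma pcong_add: "pcong l A B \<Longrightarrow> pcong l C D \<Longrightarrow> pcong l (A + C) (B + D)"
  unfolding pcong_def
  apply (elim exE)
  subgoal for K1 K2 by (rule exI[of _ "K1 + K2"]) (simp add: smult_add_right algebra_simps)
  done

lemma pcong_mult: "pcong l A B \<Longrightarrow> pcong l C D \<Longrightarrow> pcong l (A * C) (B * D)"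
  unfolding pcong_def
  apply (elim exE)
  subgoal for K1 K2 by (rule exI[of _ "B * K2 + K1 * D + smult (int l) (K1 * K2)"])
     (simp add: smult_add_right algebra_simps)
  done

lemma pcong_power: "pcong l A B \<Longrightarrow> pcong l (A ^ k) (B ^ k)"
  by (induction k) (auto intro: pcong_mult pcong_refl)

lemma pcong_binom: "prime l \<Longrightarrow> pcong l ((A + B) ^ l) (A ^ l + B ^ l)"
  unfolding pcong_def using binom_prime[of l A B] by (auto simp: of_nat_poly)

lemma pcong_const: "prime l \<Longrightarrow> pcong l ([:a:] ^ l) [:a:]"
proof -
  assume l: "prime l"
  obtain t where t: "a ^ l - a = int l * t" using fermat_int[OF l, of a] by (elim dvdE)
  have "[:a:] ^ l = [:a ^ l:]" by (simp add: poly_const_pow)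
  also have "\<dots> = [:a:] + smult (int l) [:t:]" using t by (simp add: algebra_simps)
  finally show ?thesis unfolding pcong_def by blast
qed

lemma x_pow: "([:0,1:] :: int poly) ^ k = monom 1 k"
  by (simp add: monom_altdef)

lemma frobenius:
  assumes l: "prime l"
  shows "pcong l (G ^ l) (pcompose G (monom 1 l))"
proof (induction G)
  case 0
  have "l > 0" using l prime_gt_0_nat by blast
  then show ?case by (simp add: power_0_left pcong_refl)
next
  case (pCons a G)
  have e1: "pCons a G = [:a:] + [:0,1:] * G" by simp
  have "pcong l ((pCons a G) ^ l) ([:a:] ^ l + ([:0,1:] * G) ^ l)"
    unfolding e1 by (rule pcong_binom[OF l])
  moreover have "pcong l ([:a:] ^ l + ([:0,1:] * G) ^ l) ([:a:] + monom 1 l * pcompose G (monom 1 l))"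
  proof (rule pcong_add)
    show "pcong l ([:a:] ^ l) [:a:]" by (rule pcong_const[OF l])
    have "([:0,1:] * G) ^ l = monom 1 l * G ^ l" by (simp only: power_mult_distrib x_pow)
    then show "pcong l (([:0,1:] * G) ^ l) (monom 1 l * pcompose G (monom 1 l))"
      using pcong_mult[OF pcong_refl pCons.IH, of "monom 1 l"] by simp
  qed
  ultimately show ?case by (simp add: pcompose_pCons pcong_trans)
qed

lemma monic_lemma:
  fixes F V U :: "int poly"
  assumes F: "lead_coeff F = 1" "degree F \<ge> 1" and l: "l > 0"
    and eq: "[:c:] = F * V + smult (int l) U"
  shows "int l dvd c"
proof -
  define V1 where "V1 = map_poly (\<lambda>a. a mod int l) V"
  define V2 where "V2 = map_poly (\<lambda>a. a div int l) V"
  have cV1: "coeff V1 i = coeff V i mod int l" for i unfolding V1_def by (simp add: coeff_map_poly)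
  have cV2: "coeff V2 i = coeff V i div int l" for i unfolding V2_def by (simp add: coeff_map_poly)
  have V: "V = V1 + smult (int l) V2"
    by (rule poly_eqI) (simp add: cV1 cV2)
  have eq2: "F * V1 = [:c:] - smult (int l) (U + F * V2)"
    using eq unfolding V by (simp add: algebra_simps smult_add_right)
  have "V1 = 0"
  proof (rule ccontr)
    assume nz: "V1 \<noteq> 0"
    have F0: "F \<noteq> 0" using F by auto
    define D where "D = degree (F * V1)"
    have D: "D \<ge> 1" unfolding D_def using degree_mult_eq[OF F0 nz] F by simp
    have "coeff (F * V1) D = lead_coeff V1" unfolding D_def using F by (simp add: lead_coeff_mult)
    also have "\<dots> = coeff V (degree V1) mod int l" by (simp add: cV1)
    finally have c1: "coeff (F * V1) D = coeff V (degree V1) mod int l" .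
    have "coeff (F * V1) D = - (int l * coeff (U + F * V2) D)"
      using D by (simp add: eq2 coeff_pCons split: nat.splits)
    then have "int l dvd coeff (F * V1) D" by simp
    then have "coeff (F * V1) D = 0" using c1 l
      by (metis dvd_imp_mod_0 mod_mod_trivial)
    then have "lead_coeff V1 = 0" using c1 by (simp add: cV1)
    then show False using nz by simp
  qed
  then have "[:c:] = smult (int l) (F * V2 + U)" using eq V by (simp add: algebra_simps smult_add_right)
  then have "c = int l * coeff (F * V2 + U) 0" by (metis coeff_pCons_0 coeff_smult)
  then show ?thesis by simp
qed

lemma power_add_mult_ex: "\<exists>C. (W + F * Y) ^ k = W ^ k + F * (C :: int poly)"
proof (induction k)
  case 0 then show ?case by (intro exI[of _ 0]) simp
next
  case (Suc k)
  then obtain C where C: "(W + F * Y) ^ k = W ^ k + F * C" by blast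
  show ?case
    by (rule exI[of _ "C * (W + F * Y) + W ^ k * Y"]) (simp add: C algebra_simps)
qed

lemma dedekind:
  assumes zn: "z ^ n = 1" and n: "n \<ge> 1" and l: "prime l" and ln: "\<not> l dvd n"
    and A: "ev A z = 0"
  shows "ev A (z ^ l) = 0"
proof -
  define X :: "int poly" where "X = monom 1 n - 1"
  have evX: "ev X w = w ^ n - 1" for w unfolding X_def by simp
  have cX: "coeff X n = 1" using n unfolding X_def by (simp add: coeff_monom)
  have X0: "X \<noteq> 0" using cX by auto
  have degX: "degree X = n"
  proof (rule le_antisym)
    show "degree X \<le> n" unfolding X_def
      using degree_diff_le_max[of "monom (1::int) n" 1] by (simp add: degree_monom_eq)
    show "n \<le> degree X" using cX by (intro le_degree) simp
  qed
  obtain F0 where F0: "F0 \<noteq> 0" "ev F0 z = 0" "\<And>A. ev A z = 0 \<Longrightarrow> F0 dvd A"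
    using minpoly_exists[of X z] evX zn X0 by auto
  obtain G0 where G0: "X = F0 * G0" using F0(3)[of X] evX zn by (auto elim: dvdE)
  have "lead_coeff X = 1" using cX degX by simp
  then have "lead_coeff F0 * lead_coeff G0 = 1" using G0 by (simp add: lead_coeff_mult)
  then have lc: "lead_coeff F0 = 1 \<and> lead_coeff G0 = 1 \<or> lead_coeff F0 = -1 \<and> lead_coeff G0 = -1"
    by (simp add: zmult_eq_1_iff)
  define e where "e = lead_coeff F0"
  have e2: "e * e = 1" using lc unfolding e_def by auto
  define F where "F = smult e F0"
  define G where "G = smult e G0"
  have FG: "X = F * G" unfolding F_def G_def using G0 e2 by (simp add: mult.assoc)
  have lF: "lead_coeff F = 1" unfolding F_def e_def using e2 e_def F0(1) by simp
  have evF: "ev F z = 0" unfolding F_def using F0 by simp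
  have Fdvd: "F dvd B" if "ev B z = 0" for B
  proof -
    have "F0 = smult e F" unfolding F_def using e2 by simp
    then have "F dvd F0" by (metis dvd_triv_left mult_smult_right mult.right_neutral)
    then show ?thesis using F0(3)[OF that] by (rule dvd_trans)
  qed
  have dF: "degree F \<ge> 1"
  proof (rule ccontr)
    assume "\<not> degree F \<ge> 1"
    then have "degree F = 0" by simp
    then have "F = [:1:]" using lF degree_0_id[of F] by simp
    then show False using evF by simp
  qed
  show ?thesis
  proof (cases "ev F (z ^ l) = 0")
    case True
    obtain B where "A = F * B" using Fdvd[OF A] by (elim dvdE)
    then show ?thesis using True by simp
  next
    case False
    have "ev X (z ^ l) = 0" unfolding evX using zn by (metis mult.commute power_mult power_one right_minus_eq)
    then have "ev G (z ^ l) = 0" using False FG by simp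
    then have "ev (pcompose G (monom 1 l)) z = 0" by (simp add: ev_pcompose)
    then have "F dvd pcompose G (monom 1 l)" by (rule Fdvd)
    then obtain H where H: "pcompose G (monom 1 l) = F * H" by (elim dvdE)
    obtain K where K: "G ^ l = pcompose G (monom 1 l) + smult (int l) K"
      using frobenius[OF l, of G] unfolding pcong_def by blast
    have xm: "[:0,1:] * monom c k = monom c (Suc k)" for c :: int and k
      by (simp add: monom_Suc)
    have "pderiv X = monom (int n) (n - 1)" unfolding X_def by (simp add: pderiv_diff pderiv_monom)
    then have "[:0,1:] * pderiv X = monom (int n) n" using n by (cases n) (simp_all add: monom_Suc)
    also have "\<dots> = smult (int n) (monom 1 n)" by (simp add: smult_monom)
    finally have "[:0,1:] * pderiv X = smult (int n) (monom 1 n)" .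
    also have "\<dots> = smult (int n) (X + 1)" unfolding X_def by simp
    finally have dX: "[:0,1:] * pderiv X = smult (int n) X + [:int n:]" by (simp add: smult_add_right)
    define W where "W = [:0,1:] * pderiv F * G"
    define Y where "Y = [:0,1:] * pderiv G - smult (int n) G"
    have nW: "[:int n:] = W + F * Y"
    proof -
      have "[:int n:] = [:0,1:] * pderiv X - smult (int n) X" using dX by simp
      also have "\<dots> = W + F * Y" unfolding W_def Y_def FG pderiv_mult by (simp add: algebra_simps)
      finally show ?thesis .
    qed
    obtain C where C: "(W + F * Y) ^ l = W ^ l + F * C" using power_add_mult_ex by blast
    define T where "T = ([:0,1:] * pderiv F) ^ l"
    have "W ^ l = T * G ^ l" unfolding W_def T_def by (simp only: power_mult_distrib)
    also have "\<dots> = F * (T * H) + smult (int l) (T * K)"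
      unfolding K H by (simp add: algebra_simps smult_add_right)
    finally have "[:int n:] ^ l = F * (C + T * H) + smult (int l) (T * K)"
      using C nW by (simp add: algebra_simps)
    then have "[:int n ^ l:] = F * (C + T * H) + smult (int l) (T * K)" by (simp add: poly_const_pow)
    then have "int l dvd int n ^ l"
      using monic_lemma[OF lF dF] l prime_gt_0_nat by blast
    then have "l dvd n ^ l" by (metis of_nat_dvd_iff of_nat_power)
    then have "l dvd n" using l prime_dvd_power by blast
    then show ?thesis using ln by simp
  qed
qed

lemma galois:
  assumes "z ^ n = 1" "n \<ge> 1" "coprime u n" "ev A z = 0"
  shows "ev A (z ^ u) = 0"
  using assms
proof (induction u arbitrary: z rule: less_induct)
  case (less u)
  show ?case
  proof (cases "u \<le> 1")
    case True
    then consider "u = 0" | "u = 1" by linarith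
    then show ?thesis
    proof cases
      case 1
      then have "n = 1" using less.prems(3) by simp
      then have "z = 1" using less.prems(1) by simp
      then show ?thesis using less.prems(4) 1 by simp
    next
      case 2 then show ?thesis using less.prems(4) by simp
    qed
  next
    case False
    obtain l where l: "prime l" "l dvd u" using prime_factor_nat[of u] False by auto
    obtain u' where u': "u = l * u'" using l(2) by (elim dvdE)
    have ln: "\<not> l dvd n"
      using less.prems(3) l by (metis coprime_common_divisor_nat not_prime_1 dvd_1_iff_1)
    have e1: "ev A (z ^ l) = 0" using dedekind[OF less.prems(1,2) l(1) ln less.prems(4)] .
    have "u' < u" using u' False prime_gt_1_nat[OF l(1)] by (cases "u' = 0") auto
    moreover have "(z ^ l) ^ n = 1" using less.prems(1) by (metis mult.commute power_mult power_one)
    moreover have "coprime u' n" using less.prems(3) u' by simp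
    ultimately have "ev A ((z ^ l) ^ u') = 0" using less.IH less.prems(2) e1 by blast
    then show ?thesis using u' by (simp add: power_mult)
  qed
qed


definition ee :: "nat \<Rightarrow> int \<Rightarrow> complex" where
  "ee n y = cis (2 * pi * real_of_int y / real n)"

lemma ee_add: "ee n (a + b) = ee n a * ee n b"
  unfolding ee_def by (simp add: cis_mult add_divide_distrib distrib_left)

lemma ee_0 [simp]: "ee n 0 = 1" unfolding ee_def by simp

lemma ee_minus: "ee n (- a) * ee n a = 1"
  using ee_add[of n "-a" a] by simp

lemma ee_pow: "ee n y ^ m = ee n (int m * y)"
  unfolding ee_def by (simp add: DeMoivre mult_ac)

lemma ee_1_iff:
  assumes "n > 0"
  shows "ee n y = 1 \<longleftrightarrow> int n dvd y"
proof
  assume "int n dvd y"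
  then obtain k where k: "y = int n * k" by (elim dvdE)
  have "2 * pi * real_of_int y / real n = 2 * pi * real_of_int k" using assms k by simp
  then show "ee n y = 1" unfolding ee_def by simp
next
  assume "ee n y = 1"
  then have "cos (2 * pi * real_of_int y / real n) = 1" unfolding ee_def
    by (metis Re_complex_of_real cis.sel(1) one_complex.sel(1))
  then obtain k :: int where k: "2 * pi * real_of_int y / real n = real_of_int k * 2 * pi"
    using cos_one_2pi_int by blast
  then have "real_of_int y = real_of_int k * real n" using assms
    by (simp add: field_simps)
  then have "y = k * int n" by (metis of_int_eq_iff of_int_mult of_int_of_nat_eq)
  then show "int n dvd y" by simp
qed

lemma ee_mod:
  assumes "n > 0"
  shows "ee n y = ee n 1 ^ nat (y mod int n)"
proof -
  have "y = int n * (y div int n) + y mod int n" by simp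
  then have "ee n y = ee n (int n * (y div int n)) * ee n (y mod int n)"
    by (metis ee_add)
  also have "ee n (int n * (y div int n)) = 1" using ee_1_iff[OF assms] by simp
  also have "ee n (y mod int n) = ee n 1 ^ nat (y mod int n)"
    using assms by (simp add: ee_pow)
  finally show ?thesis by simp
qed

lemma geom_root:
  fixes w :: complex
  assumes "w ^ m = 1"
  shows "(\<Sum>v<m. w ^ v) = (if w = 1 then of_nat m else 0)"
  using assms geometric_sum[of w m] by auto

lemma ee_geom:
  assumes "m > 0" "int n dvd int m * y" "n > 0"
  shows "(\<Sum>v<m. ee n (int v * y)) = (if int n dvd y then of_nat m else 0)"
proof -
  have "(\<Sum>v<m. ee n (int v * y)) = (\<Sum>v<m. ee n y ^ v)" by (simp add: ee_pow)
  also have "\<dots> = (if ee n y = 1 then of_nat m else 0)"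
    by (rule geom_root) (simp add: ee_pow ee_1_iff assms)
  finally show ?thesis using ee_1_iff[OF assms(3)] by simp
qed

lemma coprime_prime_iff: "prime p \<Longrightarrow> coprime u p \<longleftrightarrow> \<not> p dvd (u::nat)"
  by (metis coprime_commute prime_imp_coprime coprime_absorb_right not_prime_1 dvd_refl coprime_common_divisor_nat)

lemma sum_multiples:
  assumes p: "p > 0" and q: "q > 0"
  shows "(\<Sum>u\<in>{u. u < p * q \<and> p dvd u}. ee (p * q) (int u * y)) = (if int q dvd y then of_nat q else 0)"
proof -
  have S: "{u. u < p * q \<and> p dvd u} = (\<lambda>v. p * v) ` {..<q}"
  proof (intro set_eqI iffI)
    fix u assume "u \<in> {u. u < p * q \<and> p dvd u}"
    then obtain v where "u = p * v" "p * v < p * q" by (auto elim: dvdE)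
    then show "u \<in> (\<lambda>v. p * v) ` {..<q}" using p by auto
  qed (use p in auto)
  have inj: "inj_on (\<lambda>v. p * v) {..<q}" using p by (auto simp: inj_on_def)
  have "(\<Sum>u\<in>{u. u < p * q \<and> p dvd u}. ee (p * q) (int u * y)) = (\<Sum>v<q. ee (p * q) (int (p * v) * y))"
    unfolding S by (simp add: sum.reindex[OF inj])
  also have "\<dots> = (\<Sum>v<q. ee (p * q) (int v * (int p * y)))" by (simp add: mult_ac)
  also have "\<dots> = (if int (p * q) dvd int p * y then of_nat q else 0)"
    by (rule ee_geom) (use p q in \<open>auto simp: mult_ac\<close>)
  also have "int (p * q) dvd int p * y \<longleftrightarrow> int q dvd y" using p by simp
  finally show ?thesis .
qed

lemma ramanujan:
  assumes p: "prime p" and q: "prime q" and pq: "p \<noteq> q"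
  shows "(\<Sum>u\<in>{u. u < p * q \<and> coprime u (p * q)}. ee (p * q) (int u * y)) =
     (if int (p * q) dvd y then of_nat (p * q) else 0) - (if int q dvd y then of_nat q else 0)
      - (if int p dvd y then of_nat p else 0) + 1"
proof -
  have p0: "p > 0" and q0: "q > 0" using p q prime_gt_0_nat by auto
  define f where "f = (\<lambda>u::nat. ee (p * q) (int u * y))"
  define Mp where "Mp = {u. u < p * q \<and> p dvd u}"
  define Mq where "Mq = {u. u < p * q \<and> q dvd u}"
  define U where "U = {u. u < p * q \<and> coprime u (p * q)}"
  have cop: "coprime p q" using p q pq by (simp add: primes_coprime)
  have U: "U = {..<p * q} - (Mp \<union> Mq)"
    unfolding U_def Mp_def Mq_def using coprime_prime_iff[OF p] coprime_prime_iff[OF q] by auto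
  have I: "Mp \<inter> Mq = {0}"
  proof (intro set_eqI iffI)
    fix u assume "u \<in> Mp \<inter> Mq"
    then have "p dvd u" "q dvd u" "u < p * q" unfolding Mp_def Mq_def by auto
    then have "p * q dvd u" using cop by (simp add: divides_mult)
    then show "u \<in> {0}" using \<open>u < p * q\<close> by (auto elim: dvdE)
  qed (use p0 q0 in \<open>auto simp: Mp_def Mq_def\<close>)
  have sub: "Mp \<union> Mq \<subseteq> {..<p * q}" unfolding Mp_def Mq_def by auto
  have fin: "finite Mp" "finite Mq" unfolding Mp_def Mq_def by auto
  have "sum f U = sum f {..<p * q} - sum f (Mp \<union> Mq)"
    unfolding U by (rule sum_diff) (use sub in auto)
  also have "sum f (Mp \<union> Mq) = sum f Mp + sum f Mq - sum f {0}"
    using sum_Un[OF fin, of f] I by simp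
  also have "sum f {..<p * q} = (if int (p * q) dvd y then of_nat (p * q) else 0)"
    unfolding f_def by (rule ee_geom) (use p0 q0 in auto)
  also have "sum f Mp = (if int q dvd y then of_nat q else 0)"
    unfolding f_def Mp_def by (rule sum_multiples[OF p0 q0])
  also have "sum f Mq = (if int p dvd y then of_nat p else 0)"
    unfolding f_def Mq_def using sum_multiples[OF q0 p0, of y] by (simp add: mult.commute)
  also have "sum f {0} = 1" unfolding f_def by simp
  finally show ?thesis unfolding U_def f_def by simp
qed

lemma sum_if_const:
  fixes c :: "'a::comm_ring_1"
  assumes "finite A"
  shows "(\<Sum>k\<in>A. if P k then c else 0) = of_nat (card {k\<in>A. P k}) * c"
  using sum.inter_filter[OF assms, of "\<lambda>_. c" P] by simp

lemma key_identity:
  assumes p: "prime p" and q: "prime q" and pq: "p \<noteq> q"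
    and vanish: "(\<Sum>k<N. ee (p * q) (x k)) = 0"
  shows "int (p * q) * int (card {k\<in>{..<N}. int (p * q) dvd x k - b}) + int N =
         int p * int (card {k\<in>{..<N}. int p dvd x k - b}) + int q * int (card {k\<in>{..<N}. int q dvd x k - b})"
proof -
  define n where "n = p * q"
  have p0: "p > 0" and q0: "q > 0" using p q prime_gt_0_nat by auto
  have n0: "n > 0" unfolding n_def using p0 q0 by simp
  define z where "z = ee n 1"
  define A where "A = (\<Sum>k<N. monom (1::int) (nat (x k mod int n)))"
  have zx: "z ^ nat (x k mod int n) = ee n (x k)" for k unfolding z_def using ee_mod[OF n0, of "x k"] by simp
  have evA: "ev A w = (\<Sum>k<N. w ^ nat (x k mod int n))" for w unfolding A_def by (simp add: ev_sum)
  have "ev A z = 0" unfolding evA zx using vanish n_def by simp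
  moreover have "z ^ n = 1" unfolding z_def by (simp add: ee_pow ee_1_iff[OF n0])
  ultimately have gal: "ev A (z ^ u) = 0" if "coprime u n" for u
    using galois[of z n u A] that n0 by simp
  define U where "U = {u. u < p * q \<and> coprime u (p * q)}"
  have inner: "(\<Sum>k<N. ee n (int u * (x k - b))) = 0" if "u \<in> U" for u
  proof -
    have "ev A (z ^ u) = (\<Sum>k<N. ee n (int u * x k))"
    proof -
      have "(z ^ u) ^ nat (x k mod int n) = ee n (int u * x k)" for k
      proof -
        have "(z ^ u) ^ nat (x k mod int n) = (z ^ nat (x k mod int n)) ^ u"
          by (metis power_mult mult.commute)
        then show ?thesis by (simp add: zx ee_pow)
      qed
      then show ?thesis unfolding evA by simp
    qed
    then have s0: "(\<Sum>k<N. ee n (int u * x k)) = 0" using gal that unfolding U_def n_def by simp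
    have "(\<Sum>k<N. ee n (int u * (x k - b))) = (\<Sum>k<N. ee n (int u * x k) * ee n (- (int u * b)))"
      by (rule sum.cong) (simp_all add: ee_add[symmetric] algebra_simps)
    also have "\<dots> = (\<Sum>k<N. ee n (int u * x k)) * ee n (- (int u * b))"
      by (simp add: sum_distrib_right)
    finally show ?thesis using s0 by simp
  qed
  define R where "R = (\<lambda>y. (if int (p * q) dvd y then of_nat (p * q) else 0) - (if int q dvd y then of_nat q else 0)
      - (if int p dvd y then of_nat p else 0) + (1::complex))"
  have "0 = (\<Sum>u\<in>U. \<Sum>k<N. ee n (int u * (x k - b)))" using inner by simp
  also have "\<dots> = (\<Sum>k<N. \<Sum>u\<in>U. ee n (int u * (x k - b)))" by (rule sum.swap)
  also have "\<dots> = (\<Sum>k<N. R (x k - b))"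
    unfolding R_def U_def n_def using ramanujan[OF p q pq] by simp
  also have "\<dots> = of_nat (card {k\<in>{..<N}. int (p * q) dvd x k - b}) * of_nat (p * q)
      - of_nat (card {k\<in>{..<N}. int q dvd x k - b}) * of_nat q
      - of_nat (card {k\<in>{..<N}. int p dvd x k - b}) * of_nat p + of_nat N"
    unfolding R_def by (simp add: sum.distrib sum_subtractf sum_if_const)
  finally have "of_int (int (p * q) * int (card {k\<in>{..<N}. int (p * q) dvd x k - b}) + int N) =
      (of_int (int p * int (card {k\<in>{..<N}. int p dvd x k - b}) + int q * int (card {k\<in>{..<N}. int q dvd x k - b})) :: complex)"
    by (simp add: algebra_simps)
  then show ?thesis by (simp only: of_int_eq_iff)
qed


lemma unique_big:
  fixes f :: "nat \<Rightarrow> int"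
  assumes fin: "finite T" and nn: "\<And>t. t \<in> T \<Longrightarrow> f t \<ge> 0"
    and dv: "\<And>t. t \<in> T \<Longrightarrow> m dvd f t" and sm: "sum f T = m" and m: "m > 0"
  shows "\<exists>t0\<in>T. f t0 = m \<and> (\<forall>t\<in>T. t \<noteq> t0 \<longrightarrow> f t = 0)"
proof -
  have "\<exists>t0\<in>T. f t0 \<noteq> 0"
  proof (rule ccontr)
    assume "\<not> ?thesis"
    then have "sum f T = 0" by simp
    then show False using sm m by simp
  qed
  then obtain t0 where t0: "t0 \<in> T" "f t0 \<noteq> 0" by blast
  have "f t0 \<ge> m" using dv[OF t0(1)] nn[OF t0(1)] t0(2) m
    by (intro zdvd_imp_le) auto
  have split: "sum f T = f t0 + sum f (T - {t0})" using t0(1) fin by (simp add: sum.remove)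
  have rest: "sum f (T - {t0}) \<ge> 0" using nn by (intro sum_nonneg) auto
  have "f t0 = m" using split rest sm \<open>f t0 \<ge> m\<close> by linarith
  then have "sum f (T - {t0}) = 0" using split sm by simp
  then have "\<forall>t\<in>T - {t0}. f t = 0" using fin nn by (subst (asm) sum_nonneg_eq_0_iff) auto
  then show ?thesis using t0(1) \<open>f t0 = m\<close> by blast
qed

lemma dvd_iff_mod_eq:
  assumes "t < m"
  shows "int m dvd y - int t \<longleftrightarrow> y mod int m = int t"
proof -
  have "int t mod int m = int t" using assms by simp
  then show ?thesis by (metis mod_eq_dvd_iff)
qed

lemma double_sum_int: "2 * (\<Sum>t<m. int t) = int m * (int m - 1)"
  by (induction m) (auto simp: algebra_simps)

lemma single_big:
  fixes x :: "nat \<Rightarrow> int" and m m' N :: nat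
  assumes m: "prime m" "m > 2" and m': "m' > 1" and N: "N = m + m'"
    and cong: "\<And>b. int m' dvd int (card {k\<in>{..<N}. int m dvd x k - b}) - 1"
  shows "\<exists>t0. (\<forall>b. int (card {k\<in>{..<N}. int m dvd x k - b}) = (if int m dvd b - t0 then int m' + 1 else 1))
            \<and> [(\<Sum>k<N. x k) = int m' * t0] (mod int m)"
proof -
  define Cnt where "Cnt = (\<lambda>b. card {k\<in>{..<N}. int m dvd x k - b})"
  have m0: "m > 0" using m by simp
  have per: "Cnt b = Cnt (b mod int m)" for b
  proof -
    have "int m dvd x k - b \<longleftrightarrow> int m dvd x k - b mod int m" for k
      by (metis mod_eq_dvd_iff mod_mod_trivial)
    then show ?thesis unfolding Cnt_def by simp
  qed
  have onept: "{t\<in>{..<m}. int m dvd x k - int t} = {nat (x k mod int m)}" for k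
  proof -
    have "x k mod int m \<ge> 0" "x k mod int m < int m" using m0 by auto
    then show ?thesis using dvd_iff_mod_eq by fastforce
  qed
  have "(\<Sum>t<m. int (Cnt (int t))) = (\<Sum>t<m. \<Sum>k<N. if int m dvd x k - int t then 1 else 0)"
    unfolding Cnt_def by (simp add: sum_if_const)
  also have "\<dots> = (\<Sum>k<N. \<Sum>t<m. if int m dvd x k - int t then 1 else 0)" by (rule sum.swap)
  also have "\<dots> = (\<Sum>k<N. 1)"
    by (rule sum.cong) (simp_all add: sum_if_const onept[simplified])
  finally have sumC: "(\<Sum>t<m. int (Cnt (int t))) = int N" by simp
  define f where "f = (\<lambda>t. int (Cnt (int t)) - 1)"
  have fnn: "f t \<ge> 0" for t
  proof -
    have d: "int m' dvd f t" unfolding f_def Cnt_def by (rule cong)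
    show ?thesis
    proof (rule ccontr)
      assume "\<not> f t \<ge> 0"
      then have "f t = -1" unfolding f_def by simp
      then show False using d m' by simp
    qed
  qed
  have sf: "sum f {..<m} = int m'" unfolding f_def using sumC N by (simp add: sum_subtractf)
  have dvf: "int m' dvd f t" for t unfolding f_def Cnt_def by (rule cong)
  have "\<exists>t0\<in>{..<m}. f t0 = int m' \<and> (\<forall>t\<in>{..<m}. t \<noteq> t0 \<longrightarrow> f t = 0)"
    by (rule unique_big[OF _ fnn dvf sf]) (use m' in auto)
  then obtain t0 where t0: "t0 < m" "f t0 = int m'" "\<And>t. t < m \<Longrightarrow> t \<noteq> t0 \<Longrightarrow> f t = 0"
    by blast
  have C1: "int (Cnt b) = (if int m dvd b - int t0 then int m' + 1 else 1)" for b
  proof -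
    define t where "t = nat (b mod int m)"
    have tb: "int t = b mod int m" unfolding t_def using m0 by simp
    have "b mod int m < int m" using m0 by simp
    then have tm: "t < m" using tb by linarith
    have "Cnt b = Cnt (int t)" using per tb by simp
    moreover have "int m dvd b - int t0 \<longleftrightarrow> t = t0"
      using dvd_iff_mod_eq[OF t0(1), of b] tb by auto
    ultimately show ?thesis using t0 tm unfolding f_def by (cases "t = t0") auto
  qed
  have "[(\<Sum>k<N. x k) = (\<Sum>k<N. x k mod int m)] (mod int m)"
    by (rule cong_sum) (simp add: cong_def)
  also have "(\<Sum>k<N. x k mod int m) = (\<Sum>k<N. \<Sum>t<m. if int m dvd x k - int t then int t else 0)"
  proof (rule sum.cong)
    fix k assume "k \<in> {..<N}"
    have "(\<Sum>t<m. if int m dvd x k - int t then int t else 0) = (\<Sum>t\<in>{t\<in>{..<m}. int m dvd x k - int t}. int t)"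
      using sum.inter_filter[of "{..<m}" "\<lambda>t. int t" "\<lambda>t. int m dvd x k - int t"] by simp
    also have "\<dots> = x k mod int m" unfolding onept using m0 by simp
    finally show "x k mod int m = (\<Sum>t<m. if int m dvd x k - int t then int t else 0)" by simp
  qed simp
  also have "\<dots> = (\<Sum>t<m. \<Sum>k<N. if int m dvd x k - int t then int t else 0)" by (rule sum.swap)
  also have "\<dots> = (\<Sum>t<m. int t * int (Cnt (int t)))"
    unfolding Cnt_def by (simp add: sum_if_const mult.commute)
  also have "\<dots> = (\<Sum>t<m. int t + int t * f t)" unfolding f_def by (simp add: algebra_simps)
  also have "\<dots> = (\<Sum>t<m. int t) + (\<Sum>t<m. int t * f t)" by (simp add: sum.distrib)
  also have "(\<Sum>t<m. int t * f t) = int t0 * int m'"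
  proof -
    have "(\<Sum>t<m. int t * f t) = int t0 * f t0 + (\<Sum>t\<in>{..<m} - {t0}. int t * f t)"
      using t0(1) by (simp add: sum.remove)
    also have "(\<Sum>t\<in>{..<m} - {t0}. int t * f t) = 0" using t0(3) by (intro sum.neutral) auto
    finally show ?thesis using t0(2) by simp
  qed
  finally have c1: "[(\<Sum>k<N. x k) = (\<Sum>t<m. int t) + int t0 * int m'] (mod int m)" .
  have "int m dvd (\<Sum>t<m. int t)"
  proof -
    have "int m dvd 2 * (\<Sum>t<m. int t)" unfolding double_sum_int by simp
    moreover have "coprime (int m) 2"
    proof -
      have "odd m" using m prime_odd_nat by auto
      then show ?thesis by (simp add: coprime_commute)
    qed
    ultimately show ?thesis using coprime_dvd_mult_right_iff by blast
  qed
  then have "[(\<Sum>t<m. int t) + int t0 * int m' = int m' * int t0] (mod int m)"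
    by (simp add: cong_iff_dvd_diff mult.commute)
  with c1 have "[(\<Sum>k<N. x k) = int m' * int t0] (mod int m)" by (rule cong_trans)
  then show ?thesis using C1 unfolding Cnt_def by blast
qed


lemma pair_structure:
  fixes x :: "nat \<Rightarrow> int" and p q N :: nat
  assumes p: "prime p" and q: "prime q" and pq: "p \<noteq> q" and p2: "p > 2" and q2: "q > 2"
    and N: "N = p + q" and vanish: "(\<Sum>k<N. ee (p * q) (x k)) = 0"
  shows "\<exists>s t. (\<forall>k<N. int q dvd x k - t \<or> int p dvd x k - s)
    \<and> (\<forall>k<N. (\<exists>k'<N. k' \<noteq> k \<and> [x k' = x k] (mod int (p * q))) \<longleftrightarrow> (int p dvd x k - s \<and> int q dvd x k - t))
    \<and> (\<exists>k<N. int p dvd x k - s \<and> int q dvd x k - t)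
    \<and> [(\<Sum>k<N. x k) = int p * t] (mod int q) \<and> [(\<Sum>k<N. x k) = int q * s] (mod int p)"
proof -
  define c where "c = (\<lambda>b. card {k\<in>{..<N}. int (p * q) dvd x k - b})"
  define Row where "Row = (\<lambda>b. card {k\<in>{..<N}. int p dvd x k - b})"
  define Col where "Col = (\<lambda>b. card {k\<in>{..<N}. int q dvd x k - b})"
  have KI: "int p * int q * int (c b) + int N = int p * int (Row b) + int q * int (Col b)" for b
    using key_identity[OF p q pq vanish, of b] unfolding c_def Row_def Col_def by simp
  have cop: "coprime (int p) (int q)" using p q pq by (simp add: primes_coprime)
  have colc: "int p dvd int (Col b) - 1" for b
  proof -
    have "int q * (int (Col b) - 1) = int p * (int q * int (c b) + 1 - int (Row b))"
      using KI[of b] N by (simp add: algebra_simps)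
    then have "int p dvd int q * (int (Col b) - 1)" by simp
    then show ?thesis using cop coprime_dvd_mult_right_iff by blast
  qed
  have rowc: "int q dvd int (Row b) - 1" for b
  proof -
    have "int p * (int (Row b) - 1) = int q * (int p * int (c b) + 1 - int (Col b))"
      using KI[of b] N by (simp add: algebra_simps)
    then have "int q dvd int p * (int (Row b) - 1)" by simp
    moreover have "coprime (int q) (int p)" using cop by (simp add: coprime_commute)
    ultimately show ?thesis using coprime_dvd_mult_right_iff by blast
  qed
  have p1: "p > 1" and q1: "q > 1" using p2 q2 by auto
  obtain t where t: "\<And>b. int (Col b) = (if int q dvd b - t then int p + 1 else 1)"
    and tsum: "[(\<Sum>k<N. x k) = int p * t] (mod int q)"
    using single_big[OF q q2 p1, of N x] N colc unfolding Col_def by auto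
  obtain s where s: "\<And>b. int (Row b) = (if int p dvd b - s then int q + 1 else 1)"
    and ssum: "[(\<Sum>k<N. x k) = int q * s] (mod int p)"
    using single_big[OF p p2 q1, of N x] N rowc unfolding Row_def by auto
  have cval: "int (c b) = (if int p dvd b - s then 1 else 0) + (if int q dvd b - t then 1 else 0)" for b
  proof -
    have "int p * int q * int (c b) = int p * int q * ((if int p dvd b - s then 1 else 0) + (if int q dvd b - t then 1 else 0))"
      using KI[of b] s[of b] t[of b] N by (auto simp: algebra_simps)
    then show ?thesis using p1 q1 by simp
  qed
  have cpos: "c (x k) \<ge> 1" if "k < N" for k
  proof -
    have "k \<in> {k'\<in>{..<N}. int (p * q) dvd x k' - x k}" using that by simp
    then have "{k'\<in>{..<N}. int (p * q) dvd x k' - x k} \<noteq> {}" by blast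
    then show ?thesis unfolding c_def by (simp add: Suc_le_eq card_gt_0_iff)
  qed
  have I: "\<forall>k<N. int q dvd x k - t \<or> int p dvd x k - s"
  proof (intro allI impI)
    fix k assume "k < N"
    then have "int (c (x k)) \<ge> 1" using cpos by simp
    then show "int q dvd x k - t \<or> int p dvd x k - s" using cval[of "x k"] by (auto split: if_splits)
  qed
  have II: "\<forall>k<N. (\<exists>k'<N. k' \<noteq> k \<and> [x k' = x k] (mod int (p * q))) \<longleftrightarrow> (int p dvd x k - s \<and> int q dvd x k - t)"
  proof (intro allI impI)
    fix k assume k: "k < N"
    define S where "S = {k'\<in>{..<N}. int (p * q) dvd x k' - x k}"
    have kS: "k \<in> S" unfolding S_def using k by simp
    have finS: "finite S" unfolding S_def by simp
    have "(\<exists>k'<N. k' \<noteq> k \<and> [x k' = x k] (mod int (p * q))) \<longleftrightarrow> (\<exists>k'\<in>S. k' \<noteq> k)"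
      unfolding S_def by (auto simp: cong_iff_dvd_diff)
    also have "\<dots> \<longleftrightarrow> card S \<ge> 2"
    proof
      assume "\<exists>k'\<in>S. k' \<noteq> k"
      then obtain k' where "k' \<in> S" "k' \<noteq> k" by blast
      then have "card {k, k'} \<le> card S" using kS finS by (intro card_mono) auto
      then show "card S \<ge> 2" using \<open>k' \<noteq> k\<close> by simp
    next
      assume "card S \<ge> 2"
      show "\<exists>k'\<in>S. k' \<noteq> k"
      proof (rule ccontr)
        assume "\<not> (\<exists>k'\<in>S. k' \<noteq> k)"
        then have "S \<subseteq> {k}" by blast
        then have "card S \<le> 1" using card_mono[of "{k}" S] by simp
        then show False using \<open>card S \<ge> 2\<close> by simp
      qed
    qed
    also have "card S = c (x k)" unfolding S_def c_def by simp
    also have "c (x k) \<ge> 2 \<longleftrightarrow> (int p dvd x k - s \<and> int q dvd x k - t)"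
    proof -
      have "c (x k) \<ge> 2 \<longleftrightarrow> int (c (x k)) \<ge> 2" by simp
      then show ?thesis using cval[of "x k"] by (auto split: if_splits)
    qed
    finally show "(\<exists>k'<N. k' \<noteq> k \<and> [x k' = x k] (mod int (p * q))) \<longleftrightarrow> (int p dvd x k - s \<and> int q dvd x k - t)" .
  qed
  have III: "\<exists>k<N. int p dvd x k - s \<and> int q dvd x k - t"
  proof -
    obtain b where b: "[b = s] (mod int p)" "[b = t] (mod int q)"
      using binary_chinese_remainder_int[OF cop] by blast
    have bs: "int p dvd b - s" and bt: "int q dvd b - t" using b by (auto simp: cong_iff_dvd_diff)
    then have "int (c b) = 2" using cval[of b] by simp
    then have "{k\<in>{..<N}. int (p * q) dvd x k - b} \<noteq> {}" unfolding c_def by (metis card.empty zero_neq_numeral of_nat_0)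
    then obtain k where k: "k < N" "int (p * q) dvd x k - b" by auto
    then have "int p dvd x k - b" "int q dvd x k - b"
      by (metis dvd_mult_left of_nat_mult, metis dvd_mult_right of_nat_mult)
    then have "int p dvd x k - s" "int q dvd x k - t" using bs bt
      by (metis diff_add_cancel dvd_add add_diff_eq)+
    then show ?thesis using k by blast
  qed
  show ?thesis using I II III tsum ssum by blast
qed


lemma vanish_pair:
  assumes H: "hadamard_exp n N m" and a: "a < N" and b: "b < N" and ab: "a \<noteq> b"
  shows "(\<Sum>k<N. ee n (Ldiff m a b k)) = 0"
proof -
  have "(\<Sum>k<N. cis (2 * pi * real_of_int (m b k) / real n) *
                 cnj (cis (2 * pi * real_of_int (m a k) / real n))) = 0"
    using H a b ab unfolding hadamard_exp_def by auto
  moreover have "cis (2 * pi * real_of_int (m b k) / real n) * cnj (cis (2 * pi * real_of_int (m a k) / real n))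
      = ee n (Ldiff m a b k)" for k
    unfolding ee_def Ldiff_def by (simp add: cis_cnj cis_mult diff_divide_distrib algebra_simps)
  ultimately show ?thesis by simp
qed

lemma pair_sets:
  assumes p: "prime p" and q: "prime q" and pq: "p \<noteq> q" and p2: "p > 2" and q2: "q > 2"
    and N: "N = p + q" and H: "hadamard_exp (p * q) N m" and a: "a < N" and b: "b < N" and ab: "a \<noteq> b"
  obtains s t where "\<forall>c<N. int q dvd Ldiff m a b c - t \<or> int p dvd Ldiff m a b c - s"
    "\<forall>c. c \<in> Pset p q N m a b \<longleftrightarrow> c < N \<and> int q dvd Ldiff m a b c - t \<and> \<not> int p dvd Ldiff m a b c - s"
    "\<forall>c. c \<in> Qset p q N m a b \<longleftrightarrow> c < N \<and> int p dvd Ldiff m a b c - s \<and> \<not> int q dvd Ldiff m a b c - t"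
    "\<forall>c. c \<in> Rset p q N m a b \<longleftrightarrow> c < N \<and> int p dvd Ldiff m a b c - s \<and> int q dvd Ldiff m a b c - t"
    "[(\<Sum>k<N. Ldiff m a b k) = int p * t] (mod int q)" "[(\<Sum>k<N. Ldiff m a b k) = int q * s] (mod int p)"
proof -
  define x where "x = Ldiff m a b"
  obtain s t where I: "\<forall>k<N. int q dvd x k - t \<or> int p dvd x k - s"
    and II: "\<forall>k<N. (\<exists>k'<N. k' \<noteq> k \<and> [x k' = x k] (mod int (p * q))) \<longleftrightarrow> (int p dvd x k - s \<and> int q dvd x k - t)"
    and III: "\<exists>k<N. int p dvd x k - s \<and> int q dvd x k - t"
    and S1: "[(\<Sum>k<N. x k) = int p * t] (mod int q)" and S2: "[(\<Sum>k<N. x k) = int q * s] (mod int p)"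
    using pair_structure[OF p q pq p2 q2 N vanish_pair[OF H a b ab]] unfolding x_def by blast
  have R: "c \<in> Rset p q N m a b \<longleftrightarrow> c < N \<and> int p dvd x c - s \<and> int q dvd x c - t" for c
    unfolding Rset_def x_def[symmetric] using II by auto
  obtain k0 where k0: "k0 < N" "int p dvd x k0 - s" "int q dvd x k0 - t" using III by blast
  have k0R: "k0 \<in> Rset p q N m a b" using R k0 by blast
  have P: "c \<in> Pset p q N m a b \<longleftrightarrow> c < N \<and> int q dvd x c - t \<and> \<not> int p dvd x c - s" for c
  proof
    assume c: "c \<in> Pset p q N m a b"
    then have cN: "c < N" and cR: "c \<notin> Rset p q N m a b" unfolding Pset_def by auto
    from c obtain k' where k': "k' \<in> Rset p q N m a b" "[x c = x k'] (mod int q)"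
      unfolding Pset_def x_def by auto
    have "int q dvd x k' - t" using k' R by blast
    moreover have "int q dvd x c - x k'" using k'(2) by (simp add: cong_iff_dvd_diff)
    ultimately have qt: "int q dvd x c - t" by (metis diff_add_cancel dvd_add add_diff_eq)
    then show "c < N \<and> int q dvd x c - t \<and> \<not> int p dvd x c - s" using cN cR R by blast
  next
    assume c: "c < N \<and> int q dvd x c - t \<and> \<not> int p dvd x c - s"
    then have "c \<notin> Rset p q N m a b" using R by blast
    moreover have "int q dvd x c - x k0" using c k0
      by (metis diff_diff_eq2 diff_add_cancel dvd_diff add_diff_eq)
    then have "[x c = x k0] (mod int q)" by (simp add: cong_iff_dvd_diff)
    ultimately show "c \<in> Pset p q N m a b" unfolding Pset_def x_def using c k0R by (auto simp: x_def)
  qed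
  have Q: "c \<in> Qset p q N m a b \<longleftrightarrow> c < N \<and> int p dvd x c - s \<and> \<not> int q dvd x c - t" for c
  proof
    assume c: "c \<in> Qset p q N m a b"
    then have cN: "c < N" and cR: "c \<notin> Rset p q N m a b" unfolding Qset_def by auto
    from c obtain k' where k': "k' \<in> Rset p q N m a b" "[x c = x k'] (mod int p)"
      unfolding Qset_def x_def by auto
    have "int p dvd x k' - s" using k' R by blast
    moreover have "int p dvd x c - x k'" using k'(2) by (simp add: cong_iff_dvd_diff)
    ultimately have qt: "int p dvd x c - s" by (metis diff_add_cancel dvd_add add_diff_eq)
    then show "c < N \<and> int p dvd x c - s \<and> \<not> int q dvd x c - t" using cN cR R by blast
  next
    assume c: "c < N \<and> int p dvd x c - s \<and> \<not> int q dvd x c - t"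
    then have "c \<notin> Rset p q N m a b" using R by blast
    moreover have "int p dvd x c - x k0" using c k0
      by (metis diff_diff_eq2 diff_add_cancel dvd_diff add_diff_eq)
    then have "[x c = x k0] (mod int p)" by (simp add: cong_iff_dvd_diff)
    ultimately show "c \<in> Qset p q N m a b" unfolding Qset_def x_def using c k0R by (auto simp: x_def)
  qed
  show ?thesis
    by (rule that[of t s]) (use I P Q R S1 S2 in \<open>simp_all add: x_def\<close>)
qed


theorem corollary6p7:
  fixes p q N :: nat and m :: "nat \<Rightarrow> nat \<Rightarrow> int"
  assumes "prime p" "prime q" "p \<noteq> q" "p \<ge> 5" "q \<ge> 5"
    and "N = p + q"
    and "hadamard_exp (p * q) N m"
    and "i < N" "j < N" "k < N" "i \<noteq> j" "j \<noteq> k" "i \<noteq> k"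
  shows "Pset p q N m i j \<subseteq> Pplus p q N m j k \<and> Qset p q N m i j \<subseteq> Qplus p q N m j k"
proof -
  have p2: "p > 2" and q2: "q > 2" using assms by auto
  obtain s1 t1 where I1: "\<forall>c<N. int q dvd Ldiff m i j c - t1 \<or> int p dvd Ldiff m i j c - s1"
    and P1: "\<forall>c. c \<in> Pset p q N m i j \<longleftrightarrow> c < N \<and> int q dvd Ldiff m i j c - t1 \<and> \<not> int p dvd Ldiff m i j c - s1"
    and Q1: "\<forall>c. c \<in> Qset p q N m i j \<longleftrightarrow> c < N \<and> int p dvd Ldiff m i j c - s1 \<and> \<not> int q dvd Ldiff m i j c - t1"
    and R1: "\<forall>c. c \<in> Rset p q N m i j \<longleftrightarrow> c < N \<and> int p dvd Ldiff m i j c - s1 \<and> int q dvd Ldiff m i j c - t1"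
    and A1: "[(\<Sum>c<N. Ldiff m i j c) = int p * t1] (mod int q)"
    and B1: "[(\<Sum>c<N. Ldiff m i j c) = int q * s1] (mod int p)"
    by (rule pair_sets[OF assms(1,2,3) p2 q2 assms(6,7) assms(8,9,11)])
  obtain s2 t2 where I2: "\<forall>c<N. int q dvd Ldiff m j k c - t2 \<or> int p dvd Ldiff m j k c - s2"
    and P2: "\<forall>c. c \<in> Pset p q N m j k \<longleftrightarrow> c < N \<and> int q dvd Ldiff m j k c - t2 \<and> \<not> int p dvd Ldiff m j k c - s2"
    and Q2: "\<forall>c. c \<in> Qset p q N m j k \<longleftrightarrow> c < N \<and> int p dvd Ldiff m j k c - s2 \<and> \<not> int q dvd Ldiff m j k c - t2"
    and R2: "\<forall>c. c \<in> Rset p q N m j k \<longleftrightarrow> c < N \<and> int p dvd Ldiff m j k c - s2 \<and> int q dvd Ldiff m j k c - t2"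
    and A2: "[(\<Sum>c<N. Ldiff m j k c) = int p * t2] (mod int q)"
    and B2: "[(\<Sum>c<N. Ldiff m j k c) = int q * s2] (mod int p)"
    by (rule pair_sets[OF assms(1,2,3) p2 q2 assms(6,7) assms(9,10,12)])
  obtain s3 t3 where I3: "\<forall>c<N. int q dvd Ldiff m i k c - t3 \<or> int p dvd Ldiff m i k c - s3"
    and P3: "\<forall>c. c \<in> Pset p q N m i k \<longleftrightarrow> c < N \<and> int q dvd Ldiff m i k c - t3 \<and> \<not> int p dvd Ldiff m i k c - s3"
    and Q3: "\<forall>c. c \<in> Qset p q N m i k \<longleftrightarrow> c < N \<and> int p dvd Ldiff m i k c - s3 \<and> \<not> int q dvd Ldiff m i k c - t3"
    and R3: "\<forall>c. c \<in> Rset p q N m i k \<longleftrightarrow> c < N \<and> int p dvd Ldiff m i k c - s3 \<and> int q dvd Ldiff m i k c - t3"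
    and A3: "[(\<Sum>c<N. Ldiff m i k c) = int p * t3] (mod int q)"
    and B3: "[(\<Sum>c<N. Ldiff m i k c) = int q * s3] (mod int p)"
    by (rule pair_sets[OF assms(1,2,3) p2 q2 assms(6,7) assms(8,10,13)])
  have add: "Ldiff m i k c = Ldiff m i j c + Ldiff m j k c" for c unfolding Ldiff_def by simp
  have sumadd: "(\<Sum>c<N. Ldiff m i k c) = (\<Sum>c<N. Ldiff m i j c) + (\<Sum>c<N. Ldiff m j k c)"
    unfolding add by (simp add: sum.distrib)
  have cop: "coprime (int p) (int q)" using assms(1,2,3) by (simp add: primes_coprime)
  have tt: "int q dvd t3 - t1 - t2"
  proof -
    have "[(\<Sum>c<N. Ldiff m i k c) = int p * t1 + int p * t2] (mod int q)"
      unfolding sumadd by (rule cong_add[OF A1 A2])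
    then have "[int p * t3 = int p * t1 + int p * t2] (mod int q)"
      using cong_trans[OF cong_sym[OF A3]] by blast
    then have "int q dvd int p * (t3 - t1 - t2)" by (simp add: cong_iff_dvd_diff algebra_simps)
    moreover have "coprime (int q) (int p)" using cop by (simp add: coprime_commute)
    ultimately show ?thesis using coprime_dvd_mult_right_iff by blast
  qed
  have ss: "int p dvd s3 - s1 - s2"
  proof -
    have "[(\<Sum>c<N. Ldiff m i k c) = int q * s1 + int q * s2] (mod int p)"
      unfolding sumadd by (rule cong_add[OF B1 B2])
    then have "[int q * s3 = int q * s1 + int q * s2] (mod int p)"
      using cong_trans[OF cong_sym[OF B3]] by blast
    then have "int p dvd int q * (s3 - s1 - s2)" by (simp add: cong_iff_dvd_diff algebra_simps)
    then show ?thesis using cop coprime_dvd_mult_right_iff by blast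
  qed
  have dsum: "(d::int) dvd u \<Longrightarrow> d dvd w \<Longrightarrow> d dvd u + v - w \<Longrightarrow> d dvd v" for d u v w
  proof -
    assume h: "d dvd u" "d dvd w" "d dvd u + v - w"
    have "v = (u + v - w) - u + w" by simp
    then show "d dvd v" using h by (metis dvd_add dvd_diff)
  qed
  have G1: "Pset p q N m i j \<subseteq> Pplus p q N m j k"
  proof
    fix c assume c: "c \<in> Pset p q N m i j"
    then have cN: "c < N" and x1: "int q dvd Ldiff m i j c - t1" and x2: "\<not> int p dvd Ldiff m i j c - s1"
      using P1 by simp_all
    have "int q dvd Ldiff m j k c - t2"
    proof (rule ccontr)
      assume ny: "\<not> int q dvd Ldiff m j k c - t2"
      then have py: "int p dvd Ldiff m j k c - s2" using I2[rule_format, OF cN] by simp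
      have "\<not> int q dvd Ldiff m i k c - t3"
      proof
        assume "int q dvd Ldiff m i k c - t3"
        moreover have "Ldiff m i k c - t3 = (Ldiff m i j c - t1) + (Ldiff m j k c - t2) - (t3 - t1 - t2)"
          using add by simp
        ultimately have "int q dvd (Ldiff m i j c - t1) + (Ldiff m j k c - t2) - (t3 - t1 - t2)" by (simp only:)
        then show False using dsum[OF x1 tt] ny by blast
      qed
      then have "int p dvd Ldiff m i k c - s3" using I3[rule_format, OF cN] by simp
      moreover have "Ldiff m i k c - s3 = (Ldiff m j k c - s2) + (Ldiff m i j c - s1) - (s3 - s1 - s2)"
        using add by simp
      ultimately have "int p dvd (Ldiff m j k c - s2) + (Ldiff m i j c - s1) - (s3 - s1 - s2)" by (simp only:)
      then show False using dsum[OF py ss] x2 by blast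
    qed
    then show "c \<in> Pplus p q N m j k" unfolding Pplus_def using P2 R2 cN by simp
  qed
  have G2: "Qset p q N m i j \<subseteq> Qplus p q N m j k"
  proof
    fix c assume c: "c \<in> Qset p q N m i j"
    then have cN: "c < N" and x1: "int p dvd Ldiff m i j c - s1" and x2: "\<not> int q dvd Ldiff m i j c - t1"
      using Q1 by simp_all
    have "int p dvd Ldiff m j k c - s2"
    proof (rule ccontr)
      assume ny: "\<not> int p dvd Ldiff m j k c - s2"
      then have qy: "int q dvd Ldiff m j k c - t2" using I2[rule_format, OF cN] by simp
      have "\<not> int p dvd Ldiff m i k c - s3"
      proof
        assume "int p dvd Ldiff m i k c - s3"
        moreover have "Ldiff m i k c - s3 = (Ldiff m i j c - s1) + (Ldiff m j k c - s2) - (s3 - s1 - s2)"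
          using add by simp
        ultimately have "int p dvd (Ldiff m i j c - s1) + (Ldiff m j k c - s2) - (s3 - s1 - s2)" by (simp only:)
        then show False using dsum[OF x1 ss] ny by blast
      qed
      then have "int q dvd Ldiff m i k c - t3" using I3[rule_format, OF cN] by simp
      moreover have "Ldiff m i k c - t3 = (Ldiff m j k c - t2) + (Ldiff m i j c - t1) - (t3 - t1 - t2)"
        using add by simp
      ultimately have "int q dvd (Ldiff m j k c - t2) + (Ldiff m i j c - t1) - (t3 - t1 - t2)" by (simp only:)
      then show False using dsum[OF qy tt] x2 by blast
    qed
    then show "c \<in> Qplus p q N m j k" unfolding Qplus_def using Q2 R2 cN by simp
  qed
  show ?thesis using G1 G2 by blast
qed


end
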